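(* There are no rational numbers (in particular, no integers) $x_1,x_2,x_3,d_1,d_2,d_3,L$ with $x_1,x_2,x_3,d_1,d_2,d_3>0$ such that $\operatorname{rank}N\le 2$, $\operatorname{rank}N_1=2$, $\operatorname{rank}N_2=2$, and $\tilde p_1=\tilde p_2=\dots=\tilde p_8=0$. Likewise there are no such positive rational numbers with $\operatorname{rank}N\le 2$, $\operatorname{rank}N_1=\operatorname{rank}N_2=2$ satisfying $p_0=p_1=p_2=p_3=0$.
   Context: Define $p_0=x_1^2+x_2^2+x_3^2-L^2$, $p_1=x_2^2+x_3^2-d_1^2$, $p_2=x_3^2+x_1^2-d_2^2$, $p_3=x_1^2+x_2^2-d_3^2$, and $\tilde p_1=p_0$, $\tilde p_2=p_1+p_2+p_3$, $\tilde p_3=d_1p_1+d_2p_2+d_3p_3$, $\tilde p_4=x_1p_1+x_2p_2+x_3p_3$, $\tilde p_5=x_1d_1p_1+x_2d_2p_2+x_3d_3p_3$, $\tilde p_6=x_1^2p_1+x_2^2p_2+x_3^2p_3$, $\tilde p_7=d_1^2p_1+d_2^2p_2+d_3^2p_3$, $\tilde p_8=x_1^2d_1^2p_1+x_2^2d_2^2p_2+x_3^2d_3^2p_3$. $N$ is the $3\times 7$ matrix whose $i$-th row is $(1,\ d_i,\ x_i,\ x_id_i,\ x_i^2,\ d_i^2,\ x_i^2d_i^2)$; $N_1$ is the $3\times 2$ matrix with rows $(1,d_i)$; $N_2$ is the $3\times 2$ matrix with rows $(1,x_i)$, $i=1,2,3$. Ranks are over $\mathbb{Q}$. *)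

theory Defs
  imports "HOL-Analysis.Analysis"
begin

definition N_row :: "rat \<Rightarrow> rat \<Rightarrow> rat^7" where
  "N_row x d = vector [1, d, x, x*d, x^2, d^2, x^2*d^2]"

definition N_mat :: "rat \<Rightarrow> rat \<Rightarrow> rat \<Rightarrow> rat \<Rightarrow> rat \<Rightarrow> rat \<Rightarrow> rat^7^3" where
  "N_mat x1 x2 x3 d1 d2 d3 = vector [N_row x1 d1, N_row x2 d2, N_row x3 d3]"

definition N1_mat :: "rat \<Rightarrow> rat \<Rightarrow> rat \<Rightarrow> rat^2^3" where
  "N1_mat d1 d2 d3 = vector [vector [1, d1], vector [1, d2], vector [1, d3]]"

definition N2_mat :: "rat \<Rightarrow> rat \<Rightarrow> rat \<Rightarrow> rat^2^3" where
  "N2_mat x1 x2 x3 = vector [vector [1, x1], vector [1, x2], vector [1, x3]]"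

end

theory Submission imports Defs begin

lemma rows3: "rows (A::'a::field^'n^3) = {A$1, A$2, A$3}"
  unfolding rows_def row_def
proof (intro set_eqI iffI)
  fix v assume "v \<in> {\<chi> j. A $ i $ j |i. i \<in> UNIV}"
  then obtain i where "v = A$i" by (auto simp: vec_lambda_eta)
  then show "v \<in> {A$1, A$2, A$3}" using exhaust_3[of i] by auto
qed (auto simp: vec_lambda_eta)

lemma rank_le1:
  fixes A :: "'a::field^'n^3"
  assumes "A$1 = A$2" "A$2 = A$3" shows "rank A \<le> 1"
proof -
  have "rows A = {A$1}" using assms rows3 by auto
  then have "vec.dim (rows A) \<le> card {A$1}"
    by (intro vec.dim_le_card) (auto intro: vec.span_base)
  then show ?thesis by (simp add: row_rank_def_gen)
qed

lemma rank_le2_dep: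
  fixes A :: "'a::field^'n^3"
  assumes "rank A \<le> 2"
  shows "\<exists>a1 a2 a3. (a1 \<noteq> 0 \<or> a2 \<noteq> 0 \<or> a3 \<noteq> 0) \<and> (\<forall>j. a1*A$1$j + a2*A$2$j + a3*A$3$j = 0)"
proof (cases "A$1 = A$2 \<or> A$1 = A$3 \<or> A$2 = A$3")
  case True
  then show ?thesis
  proof (elim disjE)
    assume h: "A$1 = A$2" show ?thesis by (rule exI[of _ 1], rule exI[of _ "-1"], rule exI[of _ 0]) (simp add: h)
  next
    assume h: "A$1 = A$3" show ?thesis by (rule exI[of _ 1], rule exI[of _ 0], rule exI[of _ "-1"]) (simp add: h)
  next
    assume h: "A$2 = A$3" show ?thesis by (rule exI[of _ 0], rule exI[of _ 1], rule exI[of _ "-1"]) (simp add: h)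
  qed
next
  case False
  let ?S = "{A$1, A$2, A$3}"
  have c: "card ?S = 3" using False by (simp add: card_insert_if)
  have "vec.dependent ?S"
  proof (rule ccontr)
    assume "\<not> vec.dependent ?S"
    then have "vec.dim ?S = 3" using vec.dim_eq_card_independent c by metis
    then show False using assms rows3[of A] by (simp add: row_rank_def_gen)
  qed
  then obtain u where u: "\<exists>v\<in>?S. u v \<noteq> 0" "(\<Sum>v\<in>?S. u v *s v) = 0"
    using vec.dependent_finite[of ?S] by auto
  have "(\<Sum>v\<in>?S. u v *s v) = u (A$1) *s A$1 + u (A$2) *s A$2 + u (A$3) *s A$3"
    using False by (simp add: sum.insert_if add.assoc)
  with u(2) have "\<forall>j. u (A$1) * A$1$j + u (A$2) * A$2$j + u (A$3) * A$3$j = 0"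
    by (simp add: vec_eq_iff)
  then show ?thesis using u(1) by blast
qed

lemma int_sq2: "(p::int)^2 = 2*q^2 \<Longrightarrow> coprime p q \<Longrightarrow> False"
proof -
  assume h: "p^2 = 2*q^2" and c: "coprime p q"
  have "even (p^2)" using h by simp
  then have "even p" by simp
  then obtain k where k: "p = 2*k" by blast
  have "q^2 = 2*k^2" using h k by (simp add: power2_eq_square)
  then have "even (q^2)" by simp
  then have "even q" by simp
  with \<open>even p\<close> c show False by (metis coprime_common_divisor dvd_refl odd_one)
qed

lemma rat_sq2: "(r::rat)^2 \<noteq> 2"
proof
  assume h: "r^2 = 2"
  obtain p q where pq: "quotient_of r = (p,q)" by (cases "quotient_of r")
  have r: "r = of_int p / of_int q" and q: "q > 0" and c: "coprime p q"
    using quotient_of_div[OF pq] quotient_of_denom_pos[OF pq] quotient_of_coprime[OF pq] by auto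
  have "(of_int p)^2 = (2::rat) * (of_int q)^2" using h r q by (simp add: field_simps power_divide)
  then have "p^2 = 2*q^2" by (metis of_int_eq_iff of_int_mult of_int_numeral of_int_power)
  then show False using int_sq2 c by blast
qed

lemma no_sq2: "(x::rat) > 0 \<Longrightarrow> d^2 = 2*x^2 \<Longrightarrow> False"
  using rat_sq2[of "d/x"] by (simp add: power_divide)

lemma vand: "(a1::'a::field) + a2 + a3 = 0 \<Longrightarrow> a1*x1+a2*x2+a3*x3 = 0 \<Longrightarrow> a1*x1^2+a2*x2^2+a3*x3^2 = 0
  \<Longrightarrow> a1 \<noteq> 0 \<Longrightarrow> a2 \<noteq> 0 \<Longrightarrow> a3 \<noteq> 0 \<Longrightarrow> x1 = x2 \<and> x2 = x3"
proof -
  assume h: "a1 + a2 + a3 = 0" "a1*x1+a2*x2+a3*x3 = 0" "a1*x1^2+a2*x2^2+a3*x3^2 = 0" "a1 \<noteq> 0" "a2 \<noteq> 0" "a3 \<noteq> 0"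
  have e2: "a2*((x2-x3)*(x2-x1)) = 0" using h(1-3) by algebra
  have e1: "a1*((x1-x3)*(x1-x2)) = 0" using h(1-3) by algebra
  have e3: "a3*((x3-x1)*(x3-x2)) = 0" using h(1-3) by algebra
  from e1 e2 e3 h(4-6) show ?thesis by auto
qed

lemma fin: "(x::rat) > 0 \<Longrightarrow> d \<noteq> e \<Longrightarrow> 2*P + Q = 0 \<Longrightarrow> 2*d*P + e*Q = 0 \<Longrightarrow> Q = 2*x^2 - e^2 \<Longrightarrow> False"
proof -
  assume h: "x > 0" "d \<noteq> e" "2*P + Q = 0" "2*d*P + e*Q = 0" "Q = 2*x^2 - e^2"
  have "(e - d) * Q = 0" using h(3,4) by algebra
  then have "Q = 0" using h(2) by simp
  then show False using no_sq2[of x e] h(1,5) by simp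
qed

lemma Ncomp:
  "N_mat x1 x2 x3 d1 d2 d3 $ 1 = N_row x1 d1"
  "N_mat x1 x2 x3 d1 d2 d3 $ 2 = N_row x2 d2"
  "N_mat x1 x2 x3 d1 d2 d3 $ 3 = N_row x3 d3"
  "N_row x d $ 1 = 1" "N_row x d $ 2 = d" "N_row x d $ 3 = x" "N_row x d $ 5 = x^2"
  unfolding N_mat_def N_row_def vector_def by simp_all

lemma geom:
  assumes r: "rank (N_mat x1 x2 x3 d1 d2 d3) \<le> 2" and r1: "rank (N1_mat d1 d2 d3) = 2"
    and r2: "rank (N2_mat x1 x2 x3) = 2"
  shows "(x1=x2 \<and> d1=d2 \<and> d1\<noteq>d3) \<or> (x1=x3 \<and> d1=d3 \<and> d1\<noteq>d2) \<or> (x2=x3 \<and> d2=d3 \<and> d1\<noteq>d2)"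
proof -
  have nx: "\<not> (x1 = x2 \<and> x2 = x3)"
  proof
    assume "x1 = x2 \<and> x2 = x3"
    then have "rank (N2_mat x1 x2 x3) \<le> 1" by (intro rank_le1) (simp_all add: N2_mat_def)
    with r2 show False by simp
  qed
  have nd: "\<not> (d1 = d2 \<and> d2 = d3)"
  proof
    assume "d1 = d2 \<and> d2 = d3"
    then have "rank (N1_mat d1 d2 d3) \<le> 1" by (intro rank_le1) (simp_all add: N1_mat_def)
    with r1 show False by simp
  qed
  obtain a1 a2 a3 where a: "a1 \<noteq> 0 \<or> a2 \<noteq> 0 \<or> a3 \<noteq> 0"
    and e: "\<And>j. a1 * N_mat x1 x2 x3 d1 d2 d3$1$j + a2 * N_mat x1 x2 x3 d1 d2 d3$2$j + a3 * N_mat x1 x2 x3 d1 d2 d3$3$j = 0"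
    using rank_le2_dep[OF r] by blast
  have e1: "a1 + a2 + a3 = 0" using e[of 1] by (simp add: Ncomp)
  have ed: "a1*d1 + a2*d2 + a3*d3 = 0" using e[of 2] by (simp add: Ncomp)
  have ex: "a1*x1 + a2*x2 + a3*x3 = 0" using e[of 3] by (simp add: Ncomp)
  have exx: "a1*x1^2 + a2*x2^2 + a3*x3^2 = 0" using e[of 5] by (simp add: Ncomp)
  show ?thesis
  proof (cases "a1 = 0 \<or> a2 = 0 \<or> a3 = 0")
    case True
    then show ?thesis
    proof (elim disjE)
      assume z: "a1 = 0"
      then have "a3 = -a2" "a2 \<noteq> 0" using e1 a by auto
      then have "x2 = x3" "d2 = d3" using ex ed z by (auto simp: algebra_simps)
      then show ?thesis using nd by auto
    next
      assume z: "a2 = 0"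
      then have "a3 = -a1" "a1 \<noteq> 0" using e1 a by auto
      then have "x1 = x3" "d1 = d3" using ex ed z by (auto simp: algebra_simps)
      then show ?thesis using nd by auto
    next
      assume z: "a3 = 0"
      then have "a2 = -a1" "a1 \<noteq> 0" using e1 a by auto
      then have "x1 = x2" "d1 = d2" using ex ed z by (auto simp: algebra_simps)
      then show ?thesis using nd by auto
    qed
  next
    case False
    then have "x1 = x2 \<and> x2 = x3" using vand[OF e1 ex exx] by blast
    with nx show ?thesis by blast
  qed
qed

theorem theorem6p2:
  shows "\<not> (\<exists>x1 x2 x3 d1 d2 d3 L :: rat.
            x1 > 0 \<and> x2 > 0 \<and> x3 > 0 \<and> d1 > 0 \<and> d2 > 0 \<and> d3 > 0 \<and>
            rank (N_mat x1 x2 x3 d1 d2 d3) \<le> 2 \<and>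
            rank (N1_mat d1 d2 d3) = 2 \<and> rank (N2_mat x1 x2 x3) = 2 \<and>
            (let p0 = x1^2 + x2^2 + x3^2 - L^2;
                 p1 = x2^2 + x3^2 - d1^2;
                 p2 = x3^2 + x1^2 - d2^2;
                 p3 = x1^2 + x2^2 - d3^2
             in p0 = 0 \<and>
                p1 + p2 + p3 = 0 \<and>
                d1*p1 + d2*p2 + d3*p3 = 0 \<and>
                x1*p1 + x2*p2 + x3*p3 = 0 \<and>
                x1*d1*p1 + x2*d2*p2 + x3*d3*p3 = 0 \<and>
                x1^2*p1 + x2^2*p2 + x3^2*p3 = 0 \<and>
                d1^2*p1 + d2^2*p2 + d3^2*p3 = 0 \<and>
                x1^2*d1^2*p1 + x2^2*d2^2*p2 + x3^2*d3^2*p3 = 0))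
       \<and> \<not> (\<exists>x1 x2 x3 d1 d2 d3 L :: rat.
            x1 > 0 \<and> x2 > 0 \<and> x3 > 0 \<and> d1 > 0 \<and> d2 > 0 \<and> d3 > 0 \<and>
            rank (N_mat x1 x2 x3 d1 d2 d3) \<le> 2 \<and>
            rank (N1_mat d1 d2 d3) = 2 \<and> rank (N2_mat x1 x2 x3) = 2 \<and>
            x1^2 + x2^2 + x3^2 - L^2 = 0 \<and>
            x2^2 + x3^2 - d1^2 = 0 \<and>
            x3^2 + x1^2 - d2^2 = 0 \<and>
            x1^2 + x2^2 - d3^2 = 0)"
  proof (intro conjI notI)
  assume "\<exists>x1 x2 x3 d1 d2 d3 L :: rat.
            x1 > 0 \<and> x2 > 0 \<and> x3 > 0 \<and> d1 > 0 \<and> d2 > 0 \<and> d3 > 0 \<and>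
            rank (N_mat x1 x2 x3 d1 d2 d3) \<le> 2 \<and>
            rank (N1_mat d1 d2 d3) = 2 \<and> rank (N2_mat x1 x2 x3) = 2 \<and>
            (let p0 = x1^2 + x2^2 + x3^2 - L^2;
                 p1 = x2^2 + x3^2 - d1^2;
                 p2 = x3^2 + x1^2 - d2^2;
                 p3 = x1^2 + x2^2 - d3^2
             in p0 = 0 \<and>
                p1 + p2 + p3 = 0 \<and>
                d1*p1 + d2*p2 + d3*p3 = 0 \<and>
                x1*p1 + x2*p2 + x3*p3 = 0 \<and>
                x1*d1*p1 + x2*d2*p2 + x3*d3*p3 = 0 \<and>
                x1^2*p1 + x2^2*p2 + x3^2*p3 = 0 \<and>
                d1^2*p1 + d2^2*p2 + d3^2*p3 = 0 \<and>
                x1^2*d1^2*p1 + x2^2*d2^2*p2 + x3^2*d3^2*p3 = 0)"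
  then obtain x1 x2 x3 d1 d2 d3 L :: rat where h: "x1 > 0" "x2 > 0" "x3 > 0"
    "rank (N_mat x1 x2 x3 d1 d2 d3) \<le> 2" "rank (N1_mat d1 d2 d3) = 2" "rank (N2_mat x1 x2 x3) = 2"
    and s: "(x2^2 + x3^2 - d1^2) + (x3^2 + x1^2 - d2^2) + (x1^2 + x2^2 - d3^2) = 0"
    "d1*(x2^2 + x3^2 - d1^2) + d2*(x3^2 + x1^2 - d2^2) + d3*(x1^2 + x2^2 - d3^2) = 0"
    by (auto simp: Let_def)
  from geom[OF h(4-6)] show False
  proof (elim disjE conjE)
    assume q: "x1 = x2" "d1 = d2" "d1 \<noteq> d3"
    have "2*(x2^2 + x3^2 - d1^2) + (x1^2 + x2^2 - d3^2) = 0" using s(1) q by (simp add: algebra_simps)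
    moreover have "2*d1*(x2^2 + x3^2 - d1^2) + d3*(x1^2 + x2^2 - d3^2) = 0" using s(2) q by (simp add: algebra_simps)
    ultimately show False using fin[of x1 d1 d3 "x2^2 + x3^2 - d1^2" "x1^2 + x2^2 - d3^2"] q h(1) by auto
  next
    assume q: "x1 = x3" "d1 = d3" "d1 \<noteq> d2"
    have "2*(x2^2 + x3^2 - d1^2) + (x3^2 + x1^2 - d2^2) = 0" using s(1) q by (simp add: algebra_simps)
    moreover have "2*d1*(x2^2 + x3^2 - d1^2) + d2*(x3^2 + x1^2 - d2^2) = 0" using s(2) q by (simp add: algebra_simps)
    ultimately show False using fin[of x1 d1 d2 "x2^2 + x3^2 - d1^2" "x3^2 + x1^2 - d2^2"] q h(1) by auto
  next
    assume q: "x2 = x3" "d2 = d3" "d1 \<noteq> d2"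
    have "2*(x3^2 + x1^2 - d2^2) + (x2^2 + x3^2 - d1^2) = 0" using s(1) q by (simp add: algebra_simps)
    moreover have "2*d2*(x3^2 + x1^2 - d2^2) + d1*(x2^2 + x3^2 - d1^2) = 0" using s(2) q by (simp add: algebra_simps)
    ultimately show False using fin[of x2 d2 d1 "x3^2 + x1^2 - d2^2" "x2^2 + x3^2 - d1^2"] q h(2) by auto
  qed
next
  assume "\<exists>x1 x2 x3 d1 d2 d3 L :: rat.
            x1 > 0 \<and> x2 > 0 \<and> x3 > 0 \<and> d1 > 0 \<and> d2 > 0 \<and> d3 > 0 \<and>
            rank (N_mat x1 x2 x3 d1 d2 d3) \<le> 2 \<and>
            rank (N1_mat d1 d2 d3) = 2 \<and> rank (N2_mat x1 x2 x3) = 2 \<and>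
            x1^2 + x2^2 + x3^2 - L^2 = 0 \<and>
            x2^2 + x3^2 - d1^2 = 0 \<and>
            x3^2 + x1^2 - d2^2 = 0 \<and>
            x1^2 + x2^2 - d3^2 = 0"
  then obtain x1 x2 x3 d1 d2 d3 :: rat where h: "x1 > 0" "x2 > 0" "x3 > 0"
    "rank (N_mat x1 x2 x3 d1 d2 d3) \<le> 2" "rank (N1_mat d1 d2 d3) = 2" "rank (N2_mat x1 x2 x3) = 2"
    and s: "x2^2 + x3^2 - d1^2 = 0" "x3^2 + x1^2 - d2^2 = 0" "x1^2 + x2^2 - d3^2 = 0"
    by blast
  from geom[OF h(4-6)] show False
  proof (elim disjE conjE)
    assume "x1 = x2" "d1 = d2" "d1 \<noteq> d3"
    then show False using no_sq2[of x1 d3] s h(1) by auto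
  next
    assume "x1 = x3" "d1 = d3" "d1 \<noteq> d2"
    then show False using no_sq2[of x1 d2] s h(1) by auto
  next
    assume "x2 = x3" "d2 = d3" "d1 \<noteq> d2"
    then show False using no_sq2[of x2 d1] s h(2) by auto
  qed
qed

end
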